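(* Let $T=\begin{pmatrix}1&1\\0&1\end{pmatrix}\in\mathsf{SL}(2,\mathbb{Z})$. Then $$T^{12}=\begin{pmatrix}1&12\\0&1\end{pmatrix}=\left[\begin{pmatrix}1&1\\1&2\end{pmatrix},\begin{pmatrix}3&1\\-1&0\end{pmatrix}\right]^2,$$ so $T^{12}$ is a product of two commutators of elements of $\mathsf{SL}(2,\mathbb{Z})$; moreover there do not exist $X,Y\in\mathsf{SL}(2,\mathbb{Z})$ with $[X,Y]=T^{12}$. Hence the commutator length of $T^{12}$ in $\mathsf{SL}(2,\mathbb{Z})$ equals $2$.
   Context: $[X,Y]=XYX^{-1}Y^{-1}$. The commutator length of an element of $[\mathsf{SL}(2,\mathbb{Z}),\mathsf{SL}(2,\mathbb{Z})]$ is the least number of commutators of elements of $\mathsf{SL}(2,\mathbb{Z})$ whose product is that element. *)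

theory Defs
  imports "HOL-Analysis.Analysis"
begin

definition SL2Z :: "(int^2^2) set" where
  "SL2Z = {A. det A = 1}"

definition mat2 :: "int \<Rightarrow> int \<Rightarrow> int \<Rightarrow> int \<Rightarrow> int^2^2" where
  "mat2 a b c d = vector [vector [a, b], vector [c, d]]"

definition commutator :: "int^2^2 \<Rightarrow> int^2^2 \<Rightarrow> int^2^2" where
  "commutator X Y = X ** Y ** matrix_inv X ** matrix_inv Y"

definition mat_prod_list :: "(int^2^2) list \<Rightarrow> int^2^2" where
  "mat_prod_list xs = foldr (**) xs (mat 1)"

definition comm_length_SL2Z :: "int^2^2 \<Rightarrow> nat" where
  "comm_length_SL2Z g = (LEAST n. \<exists>ps :: ((int^2^2) \<times> (int^2^2)) list.
      length ps = n \<and> (\<forall>(X,Y) \<in> set ps. X \<in> SL2Z \<and> Y \<in> SL2Z) \<and>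
      mat_prod_list (map (\<lambda>(X,Y). commutator X Y) ps) = g)"

text \<open>Matrix power with respect to matrix multiplication (note: ^ on vec is componentwise).\<close>
primrec mpow :: "int^2^2 \<Rightarrow> nat \<Rightarrow> int^2^2" where
  "mpow A 0 = mat 1"
| "mpow A (Suc n) = A ** mpow A n"

end

theory Submission
  imports Defs
begin

lemma mat2_nth[simp]:
  "mat2 a b c d $ 1 $ 1 = a" "mat2 a b c d $ 1 $ 2 = b"
  "mat2 a b c d $ 2 $ 1 = c" "mat2 a b c d $ 2 $ 2 = d"
  by (simp_all add: mat2_def)

lemma mat2_eta: "(A::int^2^2) = mat2 (A$1$1) (A$1$2) (A$2$1) (A$2$2)"
  by (simp add: vec_eq_iff forall_2)

lemma mat2_eq[simp]: "mat2 a b c d = mat2 a' b' c' d' \<longleftrightarrow> a=a' \<and> b=b' \<and> c=c' \<and> d=d'"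
  by (metis mat2_nth)

lemma mat2_mult[simp]: "mat2 a b c d ** mat2 e f g h = mat2 (a*e+b*g) (a*f+b*h) (c*e+d*g) (c*f+d*h)"
  by (simp add: vec_eq_iff forall_2 matrix_matrix_mult_def sum_2)

lemma mat1_mat2: "(mat 1 :: int^2^2) = mat2 1 0 0 1"
  by (simp add: vec_eq_iff forall_2 mat_def)

lemma det_mat2[simp]: "det (mat2 a b c d) = a*d - b*c"
  by (simp add: det_2)

lemma trace_mat2[simp]: "trace (mat2 a b c d) = a + d"
  by (simp add: trace_def sum_2)

lemma inv_mat2:
  assumes "a*d - b*c = 1"
  shows "matrix_inv (mat2 a b c d) = mat2 d (-b) (-c) a"
proof -
  let ?A = "mat2 a b c d" and ?B = "mat2 d (-b) (-c) a"
  have 1: "?A ** ?B = mat 1" "?B ** ?A = mat 1" using assms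
    by (simp_all add: mat1_mat2 algebra_simps)
  have "?A ** matrix_inv ?A = mat 1 \<and> matrix_inv ?A ** ?A = mat 1"
    unfolding matrix_inv_def by (rule someI[of _ ?B]) (use 1 in simp)
  hence "matrix_inv ?A ** ?A = mat 1" by simp
  hence "matrix_inv ?A ** ?A ** ?B = ?B" by simp
  thus ?thesis using 1 by (metis matrix_mul_assoc matrix_mul_rid)
qed

lemma T12: "mpow (mat2 1 1 0 1) 12 = mat2 1 12 0 1"
  by (simp add: numeral_eq_Suc mat1_mat2)

lemma comm_ex: "mat2 1 12 0 1 = mpow (commutator (mat2 1 1 1 2) (mat2 3 1 (-1) 0)) 2"
  by (simp add: numeral_eq_Suc mat1_mat2 commutator_def inv_mat2)

lemma inv_gen:
  assumes "det (X::int^2^2) = 1"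
  shows "matrix_inv X = mat2 (X$2$2) (-X$1$2) (-X$2$1) (X$1$1)"
    "X ** matrix_inv X = mat 1" "matrix_inv X ** X = mat 1"
proof -
  obtain a b c d where X: "X = mat2 a b c d" using mat2_eta[of X] by blast
  have d: "a * d - b * c = 1" using assms X by simp
  show "matrix_inv X = mat2 (X$2$2) (-X$1$2) (-X$2$1) (X$1$1)"
    using inv_mat2[OF d] X by simp
  show "X ** matrix_inv X = mat 1" "matrix_inv X ** X = mat 1"
    using d inv_mat2[OF d] X by (simp_all add: mat1_mat2 algebra_simps)
qed

lemma tri:
  assumes "p * s = (1::int)" "a * d = (1::int)"
  shows "mat2 p q 0 s ** mat2 a b 0 d ** mat2 s (-q) 0 p ** mat2 d (-b) 0 a = mat 1"
proof -
  have "(p=1 \<and> s=1 \<or> p=-1 \<and> s=-1) \<and> (a=1 \<and> d=1 \<or> a=-1 \<and> d=-1)"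
    using assms zmult_eq_1_iff by blast
  thus ?thesis by (elim conjE disjE) (simp_all add: mat1_mat2)
qed

lemma not_comm:
  assumes X: "det X = 1" and Y: "det Y = 1"
    and C: "commutator X Y = mat2 1 12 0 1"
  shows False
proof -
  define Xi where "Xi = matrix_inv X"
  define Yi where "Yi = matrix_inv Y"
  define N where "N = (mat2 1 12 0 1 :: int^2^2)"
  note ix = inv_gen[OF X, folded Xi_def] and iy = inv_gen[OF Y, folded Yi_def]
  have C': "X ** Y ** Xi ** Yi = N" using C by (simp add: commutator_def Xi_def Yi_def N_def)
  have "N ** Y = X ** Y ** Xi"
    using C' iy by (metis matrix_mul_assoc matrix_mul_rid)
  hence "trace (N ** Y) = trace Y"
    using ix by (metis trace_mul_sym matrix_mul_assoc matrix_mul_lid)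
  hence c: "Y$2$1 = 0" unfolding N_def by (subst (asm) (1 2) mat2_eta[of Y], simp)
  have "Xi ** N = Y ** Xi ** Yi"
    using C' ix by (metis matrix_mul_assoc matrix_mul_lid)
  hence "trace (Xi ** N) = trace Xi"
    using iy by (metis trace_mul_sym matrix_mul_assoc matrix_mul_rid)
  hence r: "X$2$1 = 0" unfolding N_def ix(1) by simp
  have dx: "X$1$1 * X$2$2 = 1" using X r by (simp add: det_2)
  have dy: "Y$1$1 * Y$2$2 = 1" using Y c by (simp add: det_2)
  have "X ** Y ** Xi ** Yi = mat 1"
  proof -
    obtain p q r' s where Xe: "X = mat2 p q r' s" using mat2_eta[of X] by blast
    obtain a b c' d where Ye: "Y = mat2 a b c' d" using mat2_eta[of Y] by blast
    have "r' = 0" "c' = 0" "p * s = 1" "a * d = 1" using r c dx dy Xe Ye by auto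
    thus ?thesis unfolding ix(1) iy(1) using tri[of p s a d q b] Xe Ye by simp
  qed
  thus False using C' by (simp add: N_def mat1_mat2)
qed

lemma prod1: "mat_prod_list [A] = A"
  by (simp add: mat_prod_list_def)

theorem mainTheorem9:
  shows "mat2 1 1 1 2 \<in> SL2Z \<and> mat2 3 1 (-1) 0 \<in> SL2Z \<and> mat2 1 1 0 1 \<in> SL2Z
       \<and> mpow (mat2 1 1 0 1) 12 = mat2 1 12 0 1
       \<and> mat2 1 12 0 1 = mpow (commutator (mat2 1 1 1 2) (mat2 3 1 (-1) 0)) 2
       \<and> \<not> (\<exists>X \<in> SL2Z. \<exists>Y \<in> SL2Z. commutator X Y = mpow (mat2 1 1 0 1) 12)
       \<and> comm_length_SL2Z (mpow (mat2 1 1 0 1) 12) = 2"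
proof -
  let ?A = "mat2 1 1 1 2" and ?B = "mat2 3 1 (-1) 0"
  have nc: "\<not> (\<exists>X \<in> SL2Z. \<exists>Y \<in> SL2Z. commutator X Y = mpow (mat2 1 1 0 1) 12)"
    using not_comm unfolding T12 SL2Z_def by blast
  have ex: "\<exists>ps :: ((int^2^2) \<times> (int^2^2)) list.
      length ps = 2 \<and> (\<forall>(X,Y) \<in> set ps. X \<in> SL2Z \<and> Y \<in> SL2Z) \<and>
      mat_prod_list (map (\<lambda>(X,Y). commutator X Y) ps) = mpow (mat2 1 1 0 1) 12"
    apply (rule exI[of _ "[(?A,?B),(?A,?B)]"])
    using comm_ex unfolding T12
    by (simp add: SL2Z_def mat_prod_list_def numeral_eq_Suc)
  have lo: "\<not> (\<exists>ps :: ((int^2^2) \<times> (int^2^2)) list.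
      length ps = n \<and> (\<forall>(X,Y) \<in> set ps. X \<in> SL2Z \<and> Y \<in> SL2Z) \<and>
      mat_prod_list (map (\<lambda>(X,Y). commutator X Y) ps) = mpow (mat2 1 1 0 1) 12)" if "n < 2" for n
  proof
    assume "\<exists>ps :: ((int^2^2) \<times> (int^2^2)) list.
      length ps = n \<and> (\<forall>(X,Y) \<in> set ps. X \<in> SL2Z \<and> Y \<in> SL2Z) \<and>
      mat_prod_list (map (\<lambda>(X,Y). commutator X Y) ps) = mpow (mat2 1 1 0 1) 12"
    then obtain ps where ps: "length ps = n" "\<forall>(X,Y) \<in> set ps. X \<in> SL2Z \<and> Y \<in> SL2Z"
      "mat_prod_list (map (\<lambda>(X,Y). commutator X Y) ps) = mat2 1 12 0 1" unfolding T12 by blast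
    show False
    proof (cases "n = 0")
      case True thus False using ps by (simp add: mat_prod_list_def mat1_mat2)
    next
      case False
      then obtain X Y where "ps = [(X,Y)]" using ps(1) \<open>n < 2\<close>
        by (cases ps) auto
      thus False using ps nc unfolding T12 by (auto simp: prod1)
    qed
  qed
  have cl: "comm_length_SL2Z (mpow (mat2 1 1 0 1) 12) = 2"
    unfolding comm_length_SL2Z_def
    apply (rule Least_equality)
    using ex apply simp
    subgoal for y
    proof (rule ccontr)
      assume "\<not> 2 \<le> y" "\<exists>ps :: ((int^2^2) \<times> (int^2^2)) list.
      length ps = y \<and> (\<forall>(X,Y) \<in> set ps. X \<in> SL2Z \<and> Y \<in> SL2Z) \<and>
      mat_prod_list (map (\<lambda>(X,Y). commutator X Y) ps) = mpow (mat2 1 1 0 1) 12"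
      thus False using lo[of y] by simp
    qed
    done
  show ?thesis using nc cl T12 comm_ex by (simp add: SL2Z_def)
qed

end
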